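(* Let $F:\mathbb C^n\to\mathbb C^n$ be a square system of polynomials with real coefficients and let $I\in\mathbb{IC}^n$ be a strong interval approximate zero of $F$. Then there exist $x\in I$ and $Y\in\mathbb C^{n\times n}$ invertible with $K_{x,Y}(I)\subset I$ and $\sqrt2\,\lVert\mathbf 1_n-Y\cdot\square\mathrm JF(I)\rVert_\infty<1$. If additionally $\{\bar z: z\in K_{x,Y}(I)\}\subset I$ (complex conjugation taken entrywise), then the unique zero of $F$ contained in $I$ is real.
   Context: $\mathbb{IR}$ is the set of compact real intervals $[a,b]$, with operations $X\circ Y=\{x\circ y: x\in X,y\in Y\}$ for $\circ\in\{+,-,\cdot,/\}$ ($0\notin Y$ for division). $\mathbb{IC}=\{X+iY: X,Y\in\mathbb{IR}\}$ is the set of rectangular complex intervals, where $X+iY=\{x+iy:x\in X,y\in Y\}$, with operations defined for $I=X+iY$, $J=W+iZ$ by $I\pm J=(X\pm W)+i(Y\pm Z)$, $I\cdot J=(X W-YZ)+i(XZ+YW)$, $I/J=\frac{XW+YZ}{WW+ZZ}+i\frac{YW-XZ}{WW+ZZ}$. Operations on $\mathbb{IC}^n$ are componentwise; for an interval matrix $A=(A_{i,j})\in\mathbb{IC}^{n\times n}$ and $I\in\mathbb{IC}^n$, $A\cdot I:=\sum_{j=1}^n I_j\cdot(A_{1,j},\dots,A_{n,j})^T$. A point $x\in\mathbb C^n$ is identified with the degenerate interval vector $[\mathrm{Re}\,x,\mathrm{Re}\,x]+i[\mathrm{Im}\,x,\mathrm{Im}\,x]$. An interval enclosure of a map $F:\mathbb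 C^n\to\mathbb C^m$ is a map $\square F:\mathbb{IC}^n\to\mathbb{IC}^m$ with $\{F(x):x\in I\}\subseteq\square F(I)$ for all $I$; $\square F$ and $\square\mathrm JF$ denote fixed interval enclosures of $F$ and of its Jacobian $\mathrm JF$. For $A\in\mathbb{IC}^{n\times n}$, $\lVert A\rVert_\infty:=\max_{B\in A}\max_{v\ne0}\lVert Bv\rVert_\infty/\lVert v\rVert_\infty$ with $\lVert v\rVert_\infty=\max_i|v_i|$. The Krawczyk operator is $K_{x,Y}(I):=x-Y\cdot\square F(x)+(\mathbf 1_n-Y\cdot\square\mathrm JF(I))(I-x)$ for $I\in\mathbb{IC}^n$, $x\in\mathbb C^n$, $Y\in\mathbb C^{n\times n}$ invertible. $I$ is a strong interval approximate zero of $F$ if there exist $x\in I$ and invertible $Y$ with $K_{x,Y}(I)\subset I$ and $\sqrt2\,\lVert\mathbf 1_n-Y\cdot\square\mathrm JF(I)\rVert_\infty<1$; such an $I$ contains exactly one zero of $F$ (its associated zero). *)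

theory Defs
  imports "HOL-Analysis.Analysis"
begin

type_synonym rint = "real set"

definition is_rint :: "rint \<Rightarrow> bool" where
  "is_rint X \<longleftrightarrow> (\<exists>a b. a \<le> b \<and> X = {a..b})"

definition radd :: "rint \<Rightarrow> rint \<Rightarrow> rint" where
  "radd X Y = {x + y | x y. x \<in> X \<and> y \<in> Y}"
definition rsub :: "rint \<Rightarrow> rint \<Rightarrow> rint" where
  "rsub X Y = {x - y | x y. x \<in> X \<and> y \<in> Y}"
definition rmul :: "rint \<Rightarrow> rint \<Rightarrow> rint" where
  "rmul X Y = {x * y | x y. x \<in> X \<and> y \<in> Y}"
definition rdiv :: "rint \<Rightarrow> rint \<Rightarrow> rint" where
  "rdiv X Y = {x / y | x y. x \<in> X \<and> y \<in> Y}"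

definition rsum :: "('j::finite \<Rightarrow> rint) \<Rightarrow> rint" where
  "rsum X = {(\<Sum>j\<in>UNIV. x j) | x. \<forall>j. x j \<in> X j}"

type_synonym cint = "rint \<times> rint"

definition is_cint :: "cint \<Rightarrow> bool" where
  "is_cint I \<longleftrightarrow> is_rint (fst I) \<and> is_rint (snd I)"

definition cset :: "cint \<Rightarrow> complex set" where
  "cset I = {Complex x y | x y. x \<in> fst I \<and> y \<in> snd I}"

definition pt :: "complex \<Rightarrow> cint" where
  "pt c = ({Re c}, {Im c})"

definition cadd :: "cint \<Rightarrow> cint \<Rightarrow> cint" where
  "cadd I J = (radd (fst I) (fst J), radd (snd I) (snd J))"
definition csub :: "cint \<Rightarrow> cint \<Rightarrow> cint" where
  "csub I J = (rsub (fst I) (fst J), rsub (snd I) (snd J))"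
definition cmul :: "cint \<Rightarrow> cint \<Rightarrow> cint" where
  "cmul I J = (let X = fst I; Y = snd I; W = fst J; Z = snd J in
     (rsub (rmul X W) (rmul Y Z), radd (rmul X Z) (rmul Y W)))"
definition cdiv :: "cint \<Rightarrow> cint \<Rightarrow> cint" where
  "cdiv I J = (let X = fst I; Y = snd I; W = fst J; Z = snd J;
                   D = radd (rmul W W) (rmul Z Z) in
     (rdiv (radd (rmul X W) (rmul Y Z)) D, rdiv (rsub (rmul Y W) (rmul X Z)) D))"

definition csum :: "('j::finite \<Rightarrow> cint) \<Rightarrow> cint" where
  "csum f = (rsum (\<lambda>j. fst (f j)), rsum (\<lambda>j. snd (f j)))"

definition is_civec :: "cint^'n \<Rightarrow> bool" where
  "is_civec I \<longleftrightarrow> (\<forall>i. is_cint (I$i))"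

definition is_cimat :: "cint^'n^'m \<Rightarrow> bool" where
  "is_cimat A \<longleftrightarrow> (\<forall>i j. is_cint (A$i$j))"

definition vset :: "cint^'n \<Rightarrow> (complex^'n) set" where
  "vset I = {z. \<forall>i. z$i \<in> cset (I$i)}"

definition mset :: "cint^'n^'m \<Rightarrow> (complex^'n^'m) set" where
  "mset A = {B. \<forall>i j. B$i$j \<in> cset (A$i$j)}"

definition pvec :: "complex^'n \<Rightarrow> cint^'n" where
  "pvec x = (\<chi> i. pt (x$i))"

definition pmat :: "complex^'n^'m \<Rightarrow> cint^'n^'m" where
  "pmat Y = (\<chi> i j. pt (Y$i$j))"

definition vadd :: "cint^'n \<Rightarrow> cint^'n \<Rightarrow> cint^'n" where
  "vadd I J = (\<chi> i. cadd (I$i) (J$i))"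
definition vsub :: "cint^'n \<Rightarrow> cint^'n \<Rightarrow> cint^'n" where
  "vsub I J = (\<chi> i. csub (I$i) (J$i))"
definition msub :: "cint^'n^'m \<Rightarrow> cint^'n^'m \<Rightarrow> cint^'n^'m" where
  "msub A B = (\<chi> i j. csub (A$i$j) (B$i$j))"

text \<open>A \<cdot> I := \<Sum>_j I_j \<cdot> (A_{1,j},...,A_{n,j})^T.\<close>
definition matvec :: "cint^'n^'m \<Rightarrow> cint^'n \<Rightarrow> cint^'m" where
  "matvec A I = (\<chi> i. csum (\<lambda>j. cmul (I$j) (A$i$j)))"

definition matmul :: "cint^'k^'m \<Rightarrow> cint^'n^'k \<Rightarrow> cint^'n^'m" where
  "matmul A M = (\<chi> i l. csum (\<lambda>j. cmul (M$j$l) (A$i$j)))"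

definition vnorm_inf :: "complex^'n \<Rightarrow> real" where
  "vnorm_inf v = Max (range (\<lambda>i. cmod (v$i)))"

definition opnorm_inf :: "complex^'n^'n \<Rightarrow> real" where
  "opnorm_inf B = Sup {vnorm_inf (B *v v) / vnorm_inf v | v. v \<noteq> 0}"

definition inorm_inf :: "cint^'n^'n \<Rightarrow> real" where
  "inorm_inf A = Sup {opnorm_inf B | B. B \<in> mset A}"

definition real_poly_system :: "(complex^'n \<Rightarrow> complex^'n) \<Rightarrow> bool" where
  "real_poly_system F \<longleftrightarrow> (\<forall>i. \<exists>S c. finite S \<and>
     (\<forall>z. F z $ i = (\<Sum>\<alpha>\<in>S. of_real (c \<alpha>) * (\<Prod>j\<in>UNIV. (z$j) ^ (\<alpha> j)))))"

definition jac :: "(complex^'n \<Rightarrow> complex^'m) \<Rightarrow> complex^'n \<Rightarrow> complex^'n^'m" where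
  "jac F z = (\<chi> i j. deriv (\<lambda>t. F (z + t *s axis j 1) $ i) 0)"

definition is_enclosure :: "(cint^'n \<Rightarrow> cint^'m) \<Rightarrow> (complex^'n \<Rightarrow> complex^'m) \<Rightarrow> bool" where
  "is_enclosure bF F \<longleftrightarrow> (\<forall>I. is_civec I \<longrightarrow> is_civec (bF I) \<and> F ` vset I \<subseteq> vset (bF I))"

definition is_mat_enclosure ::
  "(cint^'n \<Rightarrow> cint^'k^'m) \<Rightarrow> (complex^'n \<Rightarrow> complex^'k^'m) \<Rightarrow> bool" where
  "is_mat_enclosure bJ J \<longleftrightarrow> (\<forall>I. is_civec I \<longrightarrow> is_cimat (bJ I) \<and> J ` vset I \<subseteq> mset (bJ I))"

definition krawczyk ::
  "(cint^'n \<Rightarrow> cint^'n) \<Rightarrow> (cint^'n \<Rightarrow> cint^'n^'n) \<Rightarrow> complex^'n \<Rightarrow> complex^'n^'n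
     \<Rightarrow> cint^'n \<Rightarrow> cint^'n" where
  "krawczyk bF bJ x Y I =
     vadd (vsub (pvec x) (matvec (pmat Y) (bF (pvec x))))
          (matvec (msub (pmat (mat 1)) (matmul (pmat Y) (bJ I))) (vsub I (pvec x)))"

definition strong_iaz ::
  "(cint^'n \<Rightarrow> cint^'n) \<Rightarrow> (cint^'n \<Rightarrow> cint^'n^'n) \<Rightarrow> cint^'n \<Rightarrow> bool" where
  "strong_iaz bF bJ I \<longleftrightarrow> is_civec I \<and>
     (\<exists>x Y. x \<in> vset I \<and> invertible Y \<and>
        vset (krawczyk bF bJ x Y I) \<subseteq> vset I \<and>
        sqrt 2 * inorm_inf (msub (pmat (mat 1)) (matmul (pmat Y) (bJ I))) < 1)"

end

theory Submission
  imports Defs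
begin


lemma cset_iff: "z \<in> cset I \<longleftrightarrow> Re z \<in> fst I \<and> Im z \<in> snd I"
  unfolding cset_def by (auto intro!: exI[of _ "Re z"] exI[of _ "Im z"] simp: complex_eq_iff)

lemma pt_mem: "c \<in> cset (pt c)" by (simp add: cset_iff pt_def)

lemma cadd_mem: "a \<in> cset I \<Longrightarrow> b \<in> cset J \<Longrightarrow> a + b \<in> cset (cadd I J)"
  by (auto simp: cset_iff cadd_def radd_def)

lemma csub_mem: "a \<in> cset I \<Longrightarrow> b \<in> cset J \<Longrightarrow> a - b \<in> cset (csub I J)"
  by (auto simp: cset_iff csub_def rsub_def)

lemma cmul_mem: "a \<in> cset I \<Longrightarrow> b \<in> cset J \<Longrightarrow> a * b \<in> cset (cmul I J)"
  by (auto simp: cset_iff cmul_def rsub_def radd_def rmul_def Let_def)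

lemma rsum_mem: "(\<And>j. x j \<in> X j) \<Longrightarrow> (\<Sum>j\<in>UNIV. x j) \<in> rsum X"
  unfolding rsum_def by blast

lemma csum_mem: "(\<And>j. a j \<in> cset (f j)) \<Longrightarrow> (\<Sum>j\<in>UNIV. a j) \<in> cset (csum f)"
  unfolding cset_iff csum_def by (auto simp: Re_sum Im_sum intro!: rsum_mem)

lemma pvec_mem: "x \<in> vset (pvec x)" by (simp add: vset_def pvec_def pt_mem)
lemma pmat_mem: "Y \<in> mset (pmat Y)" by (simp add: mset_def pmat_def pt_mem)

lemma vadd_mem: "a \<in> vset I \<Longrightarrow> b \<in> vset J \<Longrightarrow> a + b \<in> vset (vadd I J)"
  by (simp add: vset_def vadd_def cadd_mem)
lemma vsub_mem: "a \<in> vset I \<Longrightarrow> b \<in> vset J \<Longrightarrow> a - b \<in> vset (vsub I J)"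
  by (simp add: vset_def vsub_def csub_mem)
lemma msub_mem: "A \<in> mset I \<Longrightarrow> B \<in> mset J \<Longrightarrow> A - B \<in> mset (msub I J)"
  by (simp add: mset_def msub_def csub_mem)

lemma matvec_mem: "B \<in> mset A \<Longrightarrow> v \<in> vset I \<Longrightarrow> B *v v \<in> vset (matvec A I)"
  unfolding vset_def matvec_def matrix_vector_mult_def mset_def
  by (auto simp: mult.commute intro!: csum_mem cmul_mem)

lemma matmul_mem: "B \<in> mset A \<Longrightarrow> C \<in> mset M \<Longrightarrow> B ** C \<in> mset (matmul A M)"
  unfolding mset_def matmul_def matrix_matrix_mult_def
proof (clarsimp, intro csum_mem)
  fix i l k assume "\<forall>i j. B $ i $ j \<in> cset (A $ i $ j)" "\<forall>i j. C $ i $ j \<in> cset (M $ i $ j)"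
  then show "B $ i $ k * C $ k $ l \<in> cset (cmul (M $ k $ l) (A $ i $ k))"
    using cmul_mem[of "C $ k $ l" "M $ k $ l" "B $ i $ k" "A $ i $ k"] by (simp add: mult.commute)
qed

lemma krawczyk_mem:
  assumes "Fx \<in> vset (bF (pvec x))" "M \<in> mset (bJ I)" "z \<in> vset I"
  shows "x - Y *v Fx + (mat 1 - Y ** M) *v (z - x) \<in> vset (krawczyk bF bJ x Y I)"
  unfolding krawczyk_def
  by (intro vadd_mem vsub_mem matvec_mem msub_mem matmul_mem pvec_mem pmat_mem assms)



definition rb :: "real set \<Rightarrow> bool" where "rb X \<longleftrightarrow> (\<exists>R. \<forall>x\<in>X. \<bar>x\<bar> \<le> R)"

lemma rb_rint: "is_rint X \<Longrightarrow> rb X"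
proof -
  assume "is_rint X"
  then obtain a b where "X = {a..b}" unfolding is_rint_def by blast
  then show ?thesis unfolding rb_def by (intro exI[of _ "\<bar>a\<bar> + \<bar>b\<bar>"]) auto
qed

lemma rb_sing: "rb {a}" unfolding rb_def by auto

lemma rb_radd: "rb X \<Longrightarrow> rb Y \<Longrightarrow> rb (radd X Y)"
  unfolding rb_def radd_def
proof (elim exE)
  fix R S assume "\<forall>x\<in>X. \<bar>x\<bar> \<le> R" "\<forall>x\<in>Y. \<bar>x\<bar> \<le> S"
  then show "\<exists>R. \<forall>x\<in>{x + y |x y. x \<in> X \<and> y \<in> Y}. \<bar>x\<bar> \<le> R"
    by (intro exI[of _ "R + S"]) (auto intro: order.trans[OF abs_triangle_ineq] add_mono)
qed

lemma rb_rsub: "rb X \<Longrightarrow> rb Y \<Longrightarrow> rb (rsub X Y)"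
  unfolding rb_def rsub_def
proof (elim exE)
  fix R S assume "\<forall>x\<in>X. \<bar>x\<bar> \<le> R" "\<forall>x\<in>Y. \<bar>x\<bar> \<le> S"
  then show "\<exists>R. \<forall>x\<in>{x - y |x y. x \<in> X \<and> y \<in> Y}. \<bar>x\<bar> \<le> R"
    by (intro exI[of _ "R + S"]) (auto intro: order.trans[OF abs_triangle_ineq4] add_mono)
qed

lemma rb_rmul: "rb X \<Longrightarrow> rb Y \<Longrightarrow> rb (rmul X Y)"
  unfolding rb_def rmul_def
proof (elim exE)
  fix R S assume "\<forall>x\<in>X. \<bar>x\<bar> \<le> R" "\<forall>x\<in>Y. \<bar>x\<bar> \<le> S"
  then show "\<exists>R. \<forall>x\<in>{x * y |x y. x \<in> X \<and> y \<in> Y}. \<bar>x\<bar> \<le> R"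
    by (intro exI[of _ "R * S"]) (auto simp: abs_mult intro!: mult_mono order.trans[OF abs_ge_zero])
qed

lemma rb_rsum: "(\<And>j. rb (X j)) \<Longrightarrow> rb (rsum X)"
proof -
  assume "\<And>j. rb (X j)"
  then obtain R where R: "\<And>j. \<forall>x\<in>X j. \<bar>x\<bar> \<le> R j" unfolding rb_def by metis
  show ?thesis unfolding rb_def rsum_def
  proof (intro exI[of _ "\<Sum>j\<in>UNIV. R j"], clarify)
    fix x :: "'a \<Rightarrow> real" assume "\<forall>j. x j \<in> X j"
    then have "\<bar>\<Sum>j\<in>UNIV. x j\<bar> \<le> (\<Sum>j\<in>UNIV. \<bar>x j\<bar>)" "(\<Sum>j\<in>UNIV. \<bar>x j\<bar>) \<le> (\<Sum>j\<in>UNIV. R j)"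
      using R by (auto intro!: sum_abs sum_mono)
    then show "\<bar>\<Sum>j\<in>UNIV. x j\<bar> \<le> (\<Sum>j\<in>UNIV. R j)" by linarith
  qed
qed

definition cb :: "cint \<Rightarrow> bool" where "cb I \<longleftrightarrow> rb (fst I) \<and> rb (snd I)"

lemma cb_cint: "is_cint I \<Longrightarrow> cb I" by (simp add: cb_def is_cint_def rb_rint)
lemma cb_pt: "cb (pt c)" by (simp add: cb_def pt_def rb_sing)
lemma cb_csub: "cb I \<Longrightarrow> cb J \<Longrightarrow> cb (csub I J)" by (simp add: cb_def csub_def rb_rsub)
lemma cb_cmul: "cb I \<Longrightarrow> cb J \<Longrightarrow> cb (cmul I J)"
  by (simp add: cb_def cmul_def Let_def rb_rsub rb_radd rb_rmul)
lemma cb_csum: "(\<And>j. cb (f j)) \<Longrightarrow> cb (csum f)" by (simp add: cb_def csum_def rb_rsum)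

lemma cb_bound: "cb I \<Longrightarrow> \<exists>R. \<forall>z\<in>cset I. cmod z \<le> R"
proof -
  assume "cb I"
  then obtain R S where "\<forall>x\<in>fst I. \<bar>x\<bar> \<le> R" "\<forall>x\<in>snd I. \<bar>x\<bar> \<le> S" unfolding cb_def rb_def by blast
  then show ?thesis
  proof (intro exI[of _ "R + S"] ballI)
    fix z assume "z \<in> cset I"
    then have "\<bar>Re z\<bar> \<le> R" "\<bar>Im z\<bar> \<le> S" using \<open>\<forall>x\<in>fst I. \<bar>x\<bar> \<le> R\<close> \<open>\<forall>x\<in>snd I. \<bar>x\<bar> \<le> S\<close>
      by (auto simp: cset_iff)
    then show "cmod z \<le> R + S" using cmod_le[of z] by linarith
  qed
qed

lemma cb_krmat:
  assumes "is_cimat J"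
  shows "cb (msub (pmat (mat 1)) (matmul (pmat Y) J) $ i $ j)"
  using assms unfolding msub_def matmul_def pmat_def is_cimat_def
  by (auto intro!: cb_csub cb_pt cb_csum cb_cmul simp: cb_cint)

lemma vnorm_ge: "cmod (v$i) \<le> vnorm_inf v"
  unfolding vnorm_inf_def by (rule Max_ge) auto

lemma vnorm_le: "(\<And>i. cmod (v$i) \<le> R) \<Longrightarrow> vnorm_inf v \<le> R"
  unfolding vnorm_inf_def by (subst Max_le_iff) auto

lemma vnorm_nonneg: "0 \<le> vnorm_inf v"
  using vnorm_ge[of v] norm_ge_zero order.trans by blast

lemma vnorm_pos: "v \<noteq> 0 \<Longrightarrow> 0 < vnorm_inf v"
proof -
  assume "v \<noteq> 0"
  then obtain i where "v$i \<noteq> 0" by (metis vec_eq_iff zero_index)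
  then show ?thesis using vnorm_ge[of v i] zero_less_norm_iff[of "v$i"] by linarith
qed

definition msum :: "complex^'n^'m \<Rightarrow> real" where
  "msum B = (\<Sum>i\<in>UNIV. \<Sum>j\<in>UNIV. cmod (B$i$j))"

lemma vnorm_mult: "vnorm_inf (B *v v) \<le> msum B * vnorm_inf v"
proof (rule vnorm_le)
  fix i
  have "cmod ((B *v v)$i) = cmod (\<Sum>j\<in>UNIV. B$i$j * v$j)" by (simp add: matrix_vector_mult_def)
  also have "\<dots> \<le> (\<Sum>j\<in>UNIV. cmod (B$i$j) * cmod (v$j))" by (rule order.trans[OF norm_sum]) (simp add: norm_mult)
  also have "\<dots> \<le> (\<Sum>j\<in>UNIV. cmod (B$i$j) * vnorm_inf v)" by (intro sum_mono mult_left_mono vnorm_ge) auto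
  also have "\<dots> = (\<Sum>j\<in>UNIV. cmod (B$i$j)) * vnorm_inf v" by (simp add: sum_distrib_right)
  also have "\<dots> \<le> msum B * vnorm_inf v" unfolding msum_def
    by (intro mult_right_mono vnorm_nonneg member_le_sum) (auto intro: sum_nonneg)
  finally show "cmod ((B *v v)$i) \<le> msum B * vnorm_inf v" .
qed

lemma opnorm_set_ne: fixes B :: "complex^'n^'n" shows "{vnorm_inf (B *v v) / vnorm_inf v | v. v \<noteq> (0::complex^'n)} \<noteq> {}"
proof -
  have "(axis undefined 1 :: complex^'n) \<noteq> 0" by (simp add: axis_eq_0_iff)
  then show ?thesis by blast
qed

lemma opnorm_le_msum: fixes B :: "complex^'n^'n" shows "opnorm_inf B \<le> msum B"
  unfolding opnorm_inf_def
proof (rule cSup_least[OF opnorm_set_ne], clarify)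
  fix v :: "complex^'n" assume "v \<noteq> 0"
  then show "vnorm_inf (B *v v) / vnorm_inf v \<le> msum B"
    using vnorm_mult[of B v] vnorm_pos[of v] by (simp add: divide_le_eq)
qed

lemma opnorm_bound: fixes B :: "complex^'n^'n" shows "vnorm_inf (B *v v) \<le> opnorm_inf B * vnorm_inf v"
proof (cases "v = 0")
  case True then show ?thesis by (simp add: vnorm_inf_def)
next
  case False
  have "vnorm_inf (B *v v) / vnorm_inf v \<le> opnorm_inf B" unfolding opnorm_inf_def
  proof (rule cSup_upper)
    show "bdd_above {vnorm_inf (B *v v) / vnorm_inf v | v. v \<noteq> 0}"
      unfolding bdd_above_def
    proof (intro exI[of _ "msum B"], clarify)
      fix w :: "complex^'n" assume "w \<noteq> 0"
      then show "vnorm_inf (B *v w) / vnorm_inf w \<le> msum B"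
        using vnorm_mult[of B w] vnorm_pos[of w] by (simp add: divide_le_eq)
    qed
  qed (use False in auto)
  then show ?thesis using vnorm_pos[OF False] by (simp add: divide_le_eq)
qed

lemma opnorm_inorm:
  assumes "B \<in> Defs.mset A" "\<And>i j. cb (A$i$j)"
  shows "opnorm_inf B \<le> inorm_inf A"
proof -
  have "\<forall>i j. \<exists>r. \<forall>z\<in>cset (A$i$j). cmod z \<le> r" using cb_bound assms(2) by blast
  then obtain R where R: "\<And>i j. \<forall>z\<in>cset (A$i$j). cmod z \<le> R i j" by metis
  show ?thesis unfolding inorm_inf_def
  proof (rule cSup_upper)
    show "bdd_above {opnorm_inf B |B. B \<in> Defs.mset A}" unfolding bdd_above_def
    proof (intro exI[of _ "\<Sum>i\<in>UNIV. \<Sum>j\<in>UNIV. R i j"], clarify)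
      fix C assume "C \<in> Defs.mset A"
      then have "msum C \<le> (\<Sum>i\<in>UNIV. \<Sum>j\<in>UNIV. R i j)" unfolding msum_def
        using R by (intro sum_mono) (auto simp: mset_def)
      then show "opnorm_inf C \<le> (\<Sum>i\<in>UNIV. \<Sum>j\<in>UNIV. R i j)" using opnorm_le_msum[of C] by linarith
    qed
  qed (use assms in auto)
qed



definition poly_fun :: "(('n \<Rightarrow> nat) set) \<Rightarrow> (('n \<Rightarrow> nat) \<Rightarrow> real) \<Rightarrow> complex^'n \<Rightarrow> complex" where
  "poly_fun S c z = (\<Sum>\<alpha>\<in>S. of_real (c \<alpha>) * (\<Prod>j\<in>UNIV. (z$j) ^ (\<alpha> j)))"

definition pd :: "(('n::finite \<Rightarrow> nat) set) \<Rightarrow> (('n \<Rightarrow> nat) \<Rightarrow> real) \<Rightarrow> 'n \<Rightarrow> complex^'n \<Rightarrow> complex" where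
  "pd S c l z = (\<Sum>\<alpha>\<in>S. of_real (c \<alpha>) * (of_nat (\<alpha> l) * (z$l) ^ (\<alpha> l - 1) * (\<Prod>j\<in>UNIV-{l}. (z$j) ^ (\<alpha> j))))"

lemma poly_deriv_path:
  fixes p :: "'a::real_normed_vector \<Rightarrow> complex^'n::finite"
  assumes "\<And>j. ((\<lambda>t. p t $ j) has_derivative p' j) (at t within T)"
  shows "((\<lambda>t. poly_fun S c (p t)) has_derivative (\<lambda>s. \<Sum>l\<in>UNIV. pd S c l (p t) * p' l s)) (at t within T)"
proof -
  have "((\<lambda>t. poly_fun S c (p t)) has_derivative
     (\<lambda>s. \<Sum>\<alpha>\<in>S. of_real (c \<alpha>) * (\<Sum>l\<in>UNIV. (of_nat (\<alpha> l) * p' l s * (p t $ l)^(\<alpha> l - 1)) * (\<Prod>j\<in>UNIV-{l}. (p t $ j)^\<alpha> j)))) (at t within T)"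
    unfolding poly_fun_def
    by (intro has_derivative_sum has_derivative_mult_right has_derivative_prod has_derivative_power assms)
  moreover have "(\<lambda>s. \<Sum>\<alpha>\<in>S. of_real (c \<alpha>) * (\<Sum>l\<in>UNIV. (of_nat (\<alpha> l) * p' l s * (p t $ l)^(\<alpha> l - 1)) * (\<Prod>j\<in>UNIV-{l}. (p t $ j)^\<alpha> j)))
      = (\<lambda>s. \<Sum>l\<in>UNIV. pd S c l (p t) * p' l s)"
    unfolding pd_def
    by (rule ext) (simp add: sum_distrib_left sum_distrib_right sum.swap[of _ S] mult_ac)
  ultimately show ?thesis by simp
qed

lemma poly_cont: "continuous_on A (poly_fun S c)"
  unfolding poly_fun_def by (intro continuous_intros) 

lemma jac_poly:
  assumes F: "\<And>k z. F z $ k = poly_fun (S k) (c k) z"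
  shows "jac F z $ k $ l = pd (S k) (c k) l z"
proof -
  have "((\<lambda>t. poly_fun (S k) (c k) (z + t *s axis l 1)) has_derivative
          (\<lambda>s. \<Sum>m\<in>UNIV. pd (S k) (c k) m (z + 0 *s axis l 1) * (s * axis l 1 $ m))) (at 0)"
    by (rule poly_deriv_path) (auto intro!: derivative_eq_intros)
  moreover have "(\<lambda>s. \<Sum>m\<in>UNIV. pd (S k) (c k) m (z + 0 *s axis l 1) * (s * axis l 1 $ m)) = (*) (pd (S k) (c k) l z)"
    by (rule ext) (simp add: axis_def if_distrib cong: if_cong)
  ultimately have "((\<lambda>t. F (z + t *s axis l 1) $ k) has_field_derivative pd (S k) (c k) l z) (at 0)"
    by (simp add: has_field_derivative_def F)
  then show ?thesis unfolding jac_def by (simp add: DERIV_imp_deriv)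
qed



lemma mvt_row:
  fixes F :: "complex^'n::finite \<Rightarrow> complex^'n" and L :: "complex \<Rightarrow> real"
  assumes F: "\<And>k z. F z $ k = poly_fun (S k) (c k) z" and L: "bounded_linear L"
  shows "\<exists>s. 0 < s \<and> s < 1 \<and> L ((Y *v (F b - F a)) $ i) =
           L (((Y ** jac F (a + of_real s *s (b - a))) *v (b - a)) $ i)"
proof -
  define h where "h = b - a"
  define p where "p t = a + of_real t *s h" for t :: real
  define \<Phi> where "\<Phi> t = L (\<Sum>k\<in>UNIV. Y$i$k * poly_fun (S k) (c k) (p t))" for t
  have der: "(\<Phi> has_real_derivative L (((Y ** jac F (p t)) *v h) $ i)) (at t)" for t
  proof -
    have comp: "\<And>j. ((\<lambda>t. p t $ j) has_derivative (\<lambda>s. of_real s * h$j)) (at t)"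
      unfolding p_def by (auto intro!: derivative_eq_intros)
    have "(\<Phi> has_derivative (\<lambda>s. L (\<Sum>k\<in>UNIV. Y$i$k * (\<Sum>l\<in>UNIV. pd (S k) (c k) l (p t) * (of_real s * h$l))))) (at t)"
      unfolding \<Phi>_def
      by (intro bounded_linear.has_derivative[OF L] has_derivative_sum has_derivative_mult_right poly_deriv_path comp)
    moreover have "L (\<Sum>k\<in>UNIV. Y$i$k * (\<Sum>l\<in>UNIV. pd (S k) (c k) l (p t) * (of_real s * h$l)))
          = s * L (((Y ** jac F (p t)) *v h) $ i)" for s :: real
    proof -
      have "(\<Sum>k\<in>UNIV. Y$i$k * (\<Sum>l\<in>UNIV. pd (S k) (c k) l (p t) * (of_real s * h$l)))
          = s *\<^sub>R (((Y ** jac F (p t)) *v h) $ i)"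
      proof -
        have "(\<Sum>k\<in>UNIV. Y$i$k * (\<Sum>l\<in>UNIV. pd (S k) (c k) l (p t) * (of_real s * h$l)))
           = (\<Sum>k\<in>UNIV. \<Sum>l\<in>UNIV. of_real s * (Y$i$k * pd (S k) (c k) l (p t) * h$l))"
          by (simp add: sum_distrib_left mult_ac)
        also have "\<dots> = (\<Sum>l\<in>UNIV. \<Sum>k\<in>UNIV. of_real s * (Y$i$k * pd (S k) (c k) l (p t) * h$l))"
          by (rule sum.swap)
        also have "\<dots> = s *\<^sub>R (((Y ** jac F (p t)) *v h) $ i)"
          by (simp add: jac_poly[OF F] matrix_vector_mult_def matrix_matrix_mult_def scaleR_conv_of_real
            sum_distrib_left sum_distrib_right mult_ac)
        finally show ?thesis .
      qed
      then show "L (\<Sum>k\<in>UNIV. Y$i$k * (\<Sum>l\<in>UNIV. pd (S k) (c k) l (p t) * (of_real s * h$l)))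
          = s * L (((Y ** jac F (p t)) *v h) $ i)"
        by (simp add: linear_scale[OF bounded_linear.linear[OF L]])
    qed
    ultimately show ?thesis unfolding has_field_derivative_def
      by (elim has_derivative_eq_rhs) (simp add: fun_eq_iff)
  qed
  obtain s where s: "0 < s" "s < 1" "\<Phi> 1 - \<Phi> 0 = (1 - 0) * L (((Y ** jac F (p s)) *v h) $ i)"
    using MVT2[of 0 1 \<Phi>, OF _ der] by auto
  have "\<Phi> 1 - \<Phi> 0 = L ((Y *v (F b - F a)) $ i)"
    unfolding \<Phi>_def p_def h_def
    by (simp add: linear_diff[OF bounded_linear.linear[OF L], symmetric] F[symmetric] matrix_vector_mult_def
        sum_subtractf[symmetric] right_diff_distrib)
  then show ?thesis using s unfolding p_def h_def by auto
qed



lemma vset_seg: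
  assumes "is_civec I" "a \<in> vset I" "b \<in> vset I" "0 \<le> s" "s \<le> 1"
  shows "a + of_real s *s (b - a) \<in> vset I"
  unfolding vset_def
proof (clarify)
  fix i
  obtain p q r u where pq: "fst (I$i) = {p..q}" and ru: "snd (I$i) = {r..u}"
    using assms(1) unfolding is_civec_def is_cint_def is_rint_def by blast
  have A: "Re (a$i) \<in> {p..q}" "Im (a$i) \<in> {r..u}" "Re (b$i) \<in> {p..q}" "Im (b$i) \<in> {r..u}"
    using assms(2,3) pq ru by (auto simp: vset_def cset_iff)
  have e1: "Re ((a + of_real s *s (b - a))$i) = (1 - s) * Re (a$i) + s * Re (b$i)"
    by (simp add: algebra_simps)
  have e2: "Im ((a + of_real s *s (b - a))$i) = (1 - s) * Im (a$i) + s * Im (b$i)"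
    by (simp add: algebra_simps)
  have c: "(1 - s) * x + s * y \<in> {l..h}" if "x \<in> {l..h}" "y \<in> {l..h}" for x y l h :: real
  proof -
    have "(1 - s) * l \<le> (1 - s) * x" "s * l \<le> s * y" "(1 - s) * x \<le> (1 - s) * h" "s * y \<le> s * h"
      using that assms(4,5) by (auto intro: mult_left_mono)
    then show ?thesis by (auto simp: algebra_simps)
  qed
  show "(a + of_real s *s (b - a))$i \<in> cset (I$i)"
    unfolding cset_iff pq ru e1 e2 using A c by blast
qed

lemma vset_convex: fixes I :: "cint^'n" assumes civ: "is_civec I" shows "convex (vset I)"
  unfolding convex_def
proof (intro ballI allI impI)
  fix x y :: "complex^'n" and u v :: real
  assume *: "x \<in> vset I" "y \<in> vset I" "0 \<le> u" "0 \<le> v" "u + v = 1"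
  have u: "u = 1 - v" using *(5) by simp
  have "u *\<^sub>R x + v *\<^sub>R y = x + complex_of_real v *s (y - x)"
    unfolding u by (simp add: vec_eq_iff) (simp add: scaleR_conv_of_real left_diff_distrib right_diff_distrib)
  then show "u *\<^sub>R x + v *\<^sub>R y \<in> vset I" using vset_seg[OF civ *(1,2), of v] *(3-5) by auto
qed

lemma vset_compact: "is_civec I \<Longrightarrow> compact (vset I)"
proof -
  assume civ: "is_civec I"
  have eq: "vset I = (\<Inter>i. (\<lambda>z. Re (z$i)) -` fst (I$i) \<inter> (\<lambda>z. Im (z$i)) -` snd (I$i))"
    by (auto simp: vset_def cset_iff)
  have cl0: "closed (fst (I$i)) \<and> closed (snd (I$i))" for i
    using civ unfolding is_civec_def is_cint_def is_rint_def by (metis closed_atLeastAtMost)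
  have cl: "closed (fst (I$i))" "closed (snd (I$i))" for i using cl0 by auto
  have "closed (vset I)" unfolding eq
    by (intro closed_INT ballI closed_Int continuous_closed_vimage cl continuous_intros)
  moreover
  have "\<forall>i. \<exists>r. \<forall>z\<in>cset (I$i). cmod z \<le> r" using cb_bound cb_cint civ is_civec_def by blast
  then obtain R where R: "\<And>i. \<forall>z\<in>cset (I$i). cmod z \<le> R i" by metis
  have "vset I \<subseteq> cball 0 (\<Sum>i\<in>UNIV. R i)"
  proof
    fix z assume "z \<in> vset I"
    then have "norm (z$i) \<le> R i" for i using R by (auto simp: vset_def)
    then have "norm z \<le> (\<Sum>i\<in>UNIV. R i)"
      using L2_set_le_sum[of UNIV "\<lambda>i. norm (z$i)"] sum_mono[of UNIV "\<lambda>i. norm (z$i)" R]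
      by (simp add: norm_vec_def)
    then show "z \<in> cball 0 (\<Sum>i\<in>UNIV. R i)" by simp
  qed
  then have "bounded (vset I)" using bounded_cball bounded_subset by blast
  ultimately show ?thesis using compact_eq_bounded_closed by blast
qed

lemma cmod_sqrt2: "\<bar>Re u\<bar> \<le> r \<Longrightarrow> \<bar>Im u\<bar> \<le> r \<Longrightarrow> cmod u \<le> sqrt 2 * r"
proof -
  assume a: "\<bar>Re u\<bar> \<le> r" "\<bar>Im u\<bar> \<le> r"
  have "\<bar>Re u\<bar>^2 \<le> r^2" "\<bar>Im u\<bar>^2 \<le> r^2" by (rule power_mono[OF a(1) abs_ge_zero], rule power_mono[OF a(2) abs_ge_zero])
  then have "(Re u)^2 \<le> r^2" "(Im u)^2 \<le> r^2" by simp_all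
  then have "(Re u)^2 + (Im u)^2 \<le> 2 * r^2" by linarith
  then have "sqrt ((Re u)^2 + (Im u)^2) \<le> sqrt (2 * r^2)" by (rule real_sqrt_le_mono)
  also have "\<dots> = sqrt 2 * r" using a by (simp add: real_sqrt_mult)
  finally show ?thesis by (simp add: norm_complex_def)
qed

lemma poly_cnj: "poly_fun S c (\<chi> i. cnj (z$i)) = cnj (poly_fun S c z)"
  by (simp add: poly_fun_def cnj_sum cnj_prod)



lemma key:
  fixes F :: "complex^'n::finite \<Rightarrow> complex^'n" and L :: "complex \<Rightarrow> real"
  assumes F: "\<And>k z. F z $ k = poly_fun (S k) (c k) z" and L: "bounded_linear L"
    and enc: "is_mat_enclosure bJ (jac F)" and civ: "is_civec I"
    and a: "a \<in> vset I" and b: "b \<in> vset I"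
  shows "\<exists>M \<in> Defs.mset (bJ I). L ((Y *v (F b - F a)) $ i) = L (((Y ** M) *v (b - a)) $ i)"
proof -
  obtain s where s: "0 < s" "s < 1"
    "L ((Y *v (F b - F a)) $ i) = L (((Y ** jac F (a + of_real s *s (b - a))) *v (b - a)) $ i)"
    using mvt_row[OF F L] by blast
  have "a + of_real s *s (b - a) \<in> vset I" using vset_seg[OF civ a b] s by auto
  then have "jac F (a + of_real s *s (b - a)) \<in> Defs.mset (bJ I)"
    using enc civ unfolding is_mat_enclosure_def by blast
  then show ?thesis using s(3) by blast
qed

lemma rint_sing: "is_rint {a}"
  unfolding is_rint_def by (intro exI[of _ a] exI[of _ a]) simp

lemma civec_pvec: "is_civec (pvec x)"
  by (simp add: is_civec_def pvec_def pt_def is_cint_def rint_sing)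

theorem lemma4p11:
  fixes F :: "complex^'n \<Rightarrow> complex^'n"
    and bF :: "cint^'n \<Rightarrow> cint^'n"
    and bJ :: "cint^'n \<Rightarrow> cint^'n^'n"
    and I :: "cint^'n"
  assumes "real_poly_system F"
    and "is_enclosure bF F"
    and "is_mat_enclosure bJ (jac F)"
    and "strong_iaz bF bJ I"
  shows "(\<exists>x Y. x \<in> vset I \<and> invertible Y \<and>
            vset (krawczyk bF bJ x Y I) \<subseteq> vset I \<and>
            sqrt 2 * inorm_inf (msub (pmat (mat 1)) (matmul (pmat Y) (bJ I))) < 1)
    \<and> (\<forall>x Y. x \<in> vset I \<and> invertible Y \<and>
            vset (krawczyk bF bJ x Y I) \<subseteq> vset I \<and>
            sqrt 2 * inorm_inf (msub (pmat (mat 1)) (matmul (pmat Y) (bJ I))) < 1 \<and>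
            (\<lambda>z. \<chi> i. cnj (z$i)) ` vset (krawczyk bF bJ x Y I) \<subseteq> vset I
          \<longrightarrow> (\<exists>z. z \<in> vset I \<and> F z = 0 \<and> (\<forall>w\<in>vset I. F w = 0 \<longrightarrow> w = z)
                   \<and> (\<forall>i. z$i \<in> \<real>)))"
proof -
  from assms(1) obtain S c where Fk: "\<And>k z. F z $ k = poly_fun (S k) (c k) z"
    unfolding real_poly_system_def poly_fun_def by metis
  have civ: "is_civec I" using assms(4) strong_iaz_def by blast
  have cim: "is_cimat (bJ I)" using assms(3) civ is_mat_enclosure_def by blast
  show ?thesis
  proof (intro conjI allI impI)
    show "\<exists>x Y. x \<in> vset I \<and> invertible Y \<and>
            vset (krawczyk bF bJ x Y I) \<subseteq> vset I \<and>
            sqrt 2 * inorm_inf (msub (pmat (mat 1)) (matmul (pmat Y) (bJ I))) < 1"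
      using assms(4) unfolding strong_iaz_def by blast
  next
    fix x and Y :: "complex^'n^'n"
    define K where "K = krawczyk bF bJ x Y I"
    define B0 where "B0 = msub (pmat (mat 1)) (matmul (pmat Y) (bJ I))"
    assume H: "x \<in> vset I \<and> invertible Y \<and>
            vset (krawczyk bF bJ x Y I) \<subseteq> vset I \<and>
            sqrt 2 * inorm_inf (msub (pmat (mat 1)) (matmul (pmat Y) (bJ I))) < 1 \<and>
            (\<lambda>z. \<chi> i. cnj (z$i)) ` vset (krawczyk bF bJ x Y I) \<subseteq> vset I"
    then have xI: "x \<in> vset I" and invY: "invertible Y" and KI: "vset K \<subseteq> vset I"
      and c0: "sqrt 2 * inorm_inf B0 < 1" and cnjK: "(\<lambda>z. \<chi> i. cnj (z$i)) ` vset K \<subseteq> vset I"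
      unfolding K_def B0_def by auto
    define g where "g z = z - Y *v F z" for z
    have Fx: "F x \<in> vset (bF (pvec x))"
      using assms(2) civec_pvec[of x] pvec_mem[of x] unfolding is_enclosure_def by blast
    have gK: "g z \<in> vset K" if z: "z \<in> vset I" for z
    proof -
      have "g z $ i \<in> cset (K $ i)" for i
      proof -
        have comp: "\<exists>w\<in>vset K. L (w$i) = L (g z $ i)" if L: "bounded_linear L" for L :: "complex \<Rightarrow> real"
        proof -
          obtain M where M: "M \<in> Defs.mset (bJ I)"
              "L ((Y *v (F z - F x)) $ i) = L (((Y ** M) *v (z - x)) $ i)"
            using key[OF Fk L assms(3) civ xI z] by blast
          define w where "w = x - Y *v F x + (mat 1 - Y ** M) *v (z - x)"
          have wK: "w \<in> vset K" unfolding K_def w_def by (rule krawczyk_mem[where bF=bF and bJ=bJ and x=x and Y=Y and I=I, OF Fx M(1) z])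
          have "w - g z = Y *v (F z - F x) - (Y ** M) *v (z - x)"
            unfolding g_def w_def
            by (simp add: matrix_vector_mult_diff_rdistrib matrix_vector_mult_diff_distrib algebra_simps)
          then have "L (w$i) - L (g z $ i) = L ((Y *v (F z - F x)) $ i) - L (((Y ** M) *v (z - x)) $ i)"
            by (metis linear_diff[OF bounded_linear.linear[OF L]] vector_minus_component)
          with M(2) wK show ?thesis by auto
        qed
        obtain w1 where w1: "w1 \<in> vset K" "Re (w1$i) = Re (g z$i)" using comp[OF bounded_linear_Re] by blast
        obtain w2 where w2: "w2 \<in> vset K" "Im (w2$i) = Im (g z$i)" using comp[OF bounded_linear_Im] by blast
        have "Re (w1$i) \<in> fst (K$i)" "Im (w2$i) \<in> snd (K$i)"
          using w1(1) w2(1) by (auto simp: vset_def cset_iff)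
        then show ?thesis using w1(2) w2(2) by (simp add: cset_iff)
      qed
      then show ?thesis by (simp add: vset_def)
    qed
    have gI: "g \<in> vset I \<rightarrow> vset I" using gK KI by auto
    have geq: "g = (\<lambda>z. \<chi> i. z$i - (\<Sum>k\<in>UNIV. Y$i$k * poly_fun (S k) (c k) z))"
      by (auto simp: fun_eq_iff vec_eq_iff g_def matrix_vector_mult_def Fk)
    have contg: "continuous_on (vset I) g"
      unfolding geq by (intro continuous_intros poly_cont)
    obtain z where zI: "z \<in> vset I" and gz: "g z = z"
      using brouwer[OF vset_compact[OF civ] vset_convex[OF civ] _ contg gI] xI by blast
    have Fz: "F z = 0"
    proof -
      have "Y *v F z = 0" using gz unfolding g_def by simp
      obtain Y' where "Y' ** Y = mat 1" using invY unfolding invertible_def by blast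
      then have "F z = Y' *v (Y *v F z)" by (simp add: matrix_vector_mul_assoc)
      then show ?thesis using \<open>Y *v F z = 0\<close> by simp
    qed
    have uniq: "w = z" if wI: "w \<in> vset I" and Fw: "F w = 0" for w
    proof -
      define V where "V = vnorm_inf (w - z)"
      have bnd: "\<bar>L ((w - z)$i)\<bar> \<le> inorm_inf B0 * V"
        if L: "bounded_linear L" and Lc: "\<And>u. \<bar>L u\<bar> \<le> cmod u" for L :: "complex \<Rightarrow> real" and i
      proof -
        obtain M where M: "M \<in> Defs.mset (bJ I)"
            "L ((Y *v (F w - F z)) $ i) = L (((Y ** M) *v (w - z)) $ i)"
          using key[OF Fk L assms(3) civ zI wI] by blast
        have lin: "linear L" using bounded_linear.linear[OF L] .
        have "L (((Y ** M) *v (w - z)) $ i) = 0" using M(2) Fz Fw linear_0[OF lin] by simp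
        moreover have "((mat 1 - Y ** M) *v (w - z)) $ i = (w - z)$i - ((Y ** M) *v (w - z)) $ i"
          by (simp add: matrix_vector_mult_diff_rdistrib)
        ultimately have eq: "L ((w - z)$i) = L (((mat 1 - Y ** M) *v (w - z)) $ i)"
          by (simp add: linear_diff[OF lin])
        have Bm: "mat 1 - Y ** M \<in> Defs.mset B0"
          unfolding B0_def by (intro msub_mem matmul_mem pmat_mem M(1))
        have "\<bar>L ((w - z)$i)\<bar> \<le> cmod (((mat 1 - Y ** M) *v (w - z)) $ i)" using eq Lc by simp
        also have "\<dots> \<le> vnorm_inf ((mat 1 - Y ** M) *v (w - z))" by (rule vnorm_ge)
        also have "\<dots> \<le> opnorm_inf (mat 1 - Y ** M) * V" unfolding V_def by (rule opnorm_bound)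
        also have "\<dots> \<le> inorm_inf B0 * V"
          using opnorm_inorm[OF Bm] cb_krmat[OF cim] vnorm_nonneg[of "w - z"] unfolding V_def B0_def
          by (auto intro: mult_right_mono)
        finally show ?thesis .
      qed
      have "cmod ((w - z)$i) \<le> sqrt 2 * (inorm_inf B0 * V)" for i
        by (rule cmod_sqrt2; rule bnd) (auto simp: abs_Re_le_cmod abs_Im_le_cmod bounded_linear_Re bounded_linear_Im)
      then have "V \<le> sqrt 2 * inorm_inf B0 * V" unfolding V_def by (intro vnorm_le) (simp add: mult.assoc)
      moreover have "0 \<le> V" unfolding V_def by (rule vnorm_nonneg)
      ultimately have "V = 0"
      proof (cases "V = 0")
        case False
        assume a: "V \<le> sqrt 2 * inorm_inf B0 * V" "0 \<le> V"
        then have "0 < V" using False by simp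
        then have "sqrt 2 * inorm_inf B0 * V < 1 * V" using c0 by (rule mult_strict_right_mono[rotated])
        then show ?thesis using a by simp
      qed
      then have "cmod ((w - z)$i) \<le> 0" for i using vnorm_ge[of "w - z" i] unfolding V_def by simp
      then show ?thesis by (simp add: vec_eq_iff)
    qed
    have zK: "z \<in> vset K" using gK[OF zI] gz by simp
    define zc where "zc = (\<chi> i. cnj (z$i))"
    have zcI: "zc \<in> vset I" using cnjK zK unfolding zc_def by blast
    have "F zc = 0"
    proof -
      have "F zc $ k = 0" for k
      proof -
        have "poly_fun (S k) (c k) z = 0" using Fz Fk[of z k] by simp
        then show ?thesis unfolding zc_def Fk poly_cnj by simp
      qed
      then show ?thesis by (simp add: vec_eq_iff)
    qed
    then have "zc = z" using uniq zcI by blast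
    then have "\<forall>i. z$i \<in> \<real>" unfolding zc_def by (simp add: vec_eq_iff Reals_cnj_iff)
    then show "\<exists>z. z \<in> vset I \<and> F z = 0 \<and> (\<forall>w\<in>vset I. F w = 0 \<longrightarrow> w = z) \<and> (\<forall>i. z$i \<in> \<real>)"
      using zI Fz uniq by blast
  qed
qed

end
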